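(* Under the standing assumptions below, let $\eta>0$. If $x$ is sufficiently large (in terms of $\epsilon$ and $\eta$), then for every residue class $a\bmod 36$ with $2a\not\in Q$ (modulo $36$) we have $\delta_a\leq 0.04+\eta$.
   Context: Standing assumptions and notation: $\epsilon>0$ is fixed, $\delta_0=\frac14-\frac{2}{\pi^2}$, and $A\subseteq[1,x]\cap\mathbb{N}$ is a set with $|A|>(\delta_0+\epsilon)x$ such that $A+A=\{a+b:a,b\in A\}$ contains no squarefree integer, and $A$ is not a subset of $4\mathbb{N}$, nor of $9\mathbb{N}$, nor of $\{n\in\mathbb{N}:n\equiv 2\pmod 4\}$. For $a\in\{0,\dots,35\}$ put $\delta_a=\frac{36\cdot\#\{n\in A: n\equiv a\pmod{36}\}}{x}$. Let $U$ be the set of residues $a\bmod 36$ with $\delta_a>1-\frac{9}{\pi^2}+\epsilon/100$, let $V$ be the set of residues $a\bmod 36$ with $\delta_a>0$, and let $Q=\{0,4,8,9,12,16,18,20,24,27,28,32\}$ (the residue classes mod $36$ containing no squarefree integers). *)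

theory Defs
  imports Complex_Main "HOL-Computational_Algebra.Squarefree"
begin

definition delta0 :: real where
  "delta0 = 1/4 - 2 / pi^2"

text \<open>Residue classes mod 36 containing no squarefree integers.\<close>
definition Qres :: "nat set" where
  "Qres = {0,4,8,9,12,16,18,20,24,27,28,32}"

definition standing :: "real \<Rightarrow> real \<Rightarrow> nat set \<Rightarrow> bool" where
  "standing \<epsilon> x A \<longleftrightarrow>
     A \<subseteq> {n. 1 \<le> n \<and> real n \<le> x} \<and>
     real (card A) > (delta0 + \<epsilon>) * x \<and>
     (\<forall>a\<in>A. \<forall>b\<in>A. \<not> squarefree (a + b)) \<and>
     \<not> (\<forall>n\<in>A. 4 dvd n) \<and>
     \<not> (\<forall>n\<in>A. 9 dvd n) \<and>
     \<not> (\<forall>n\<in>A. n mod 4 = 2)"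

definition delta_res :: "nat set \<Rightarrow> real \<Rightarrow> nat \<Rightarrow> real" where
  "delta_res A x a = 36 * real (card {n\<in>A. n mod 36 = a}) / x"

end

theory Submission
  imports Defs "HOL-Number_Theory.Cong"
begin

lemma res4: "\<forall>c<36::nat. c mod 4 = 0 \<longrightarrow> c \<in> Qres"
  unfolding Qres_def by code_simp

lemma res9: "\<forall>c<36::nat. c mod 9 = 0 \<longrightarrow> c \<in> Qres"
  unfolding Qres_def by code_simp

lemma nsf_prime:
  fixes s :: nat assumes "s > 0" "\<not> squarefree s"
  shows "\<exists>p. prime p \<and> p^2 dvd s"
proof -
  obtain y where y: "y^2 dvd s" "\<not> y dvd 1" using assms(2) by (rule not_squarefreeE)
  have "y \<noteq> 1" using y by auto
  then obtain p where p: "prime p" "p dvd y" using prime_factor_nat by blast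
  have "p^2 dvd y^2" using p by (simp add: dvd_power_same)
  then show ?thesis using p y dvd_trans by blast
qed

lemma not_prime4: "\<not> prime (4::nat)"
proof
  assume "prime (4::nat)"
  have "\<forall>m. m dvd 4 \<longrightarrow> m = 1 \<or> m = (4::nat)" using \<open>prime (4::nat)\<close> by (simp add: prime_nat_iff)
  then have "(2::nat) dvd 4 \<longrightarrow> (2::nat) = 1 \<or> (2::nat) = 4" by (rule allE)
  then show False by simp
qed

lemma coprime36:
  fixes p :: nat assumes "prime p" "5 \<le> p" shows "coprime 36 p"
proof -
  have "\<not> p dvd 36"
  proof
    assume "p dvd 36"
    then have "p dvd 2^2 * 3^2" by simp
    then have "p dvd 2^2 \<or> p dvd 3^2" using assms(1) prime_dvd_mult_iff by blast
    then have "p dvd 2 \<or> p dvd 3" using assms(1) prime_dvd_power by blast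
    then have "p \<le> 3"
    proof
      assume "p dvd 2" then have "p \<le> 2" by (rule dvd_imp_le) simp
      then show ?thesis by simp
    next
      assume "p dvd 3" then show "p \<le> 3" by (rule dvd_imp_le) simp
    qed
    then show False using assms by simp
  qed
  then show ?thesis using assms prime_imp_coprime coprime_commute by blast
qed

lemma spacing:
  fixes S :: "nat set" and x :: real and M :: nat
  assumes "M > 0" "x \<ge> 0" "\<forall>n\<in>S. real n \<le> x" "\<forall>u\<in>S. \<forall>v\<in>S. [u = v] (mod M)"
  shows "real (card S) \<le> x / M + 1"
proof -
  have inj: "inj_on (\<lambda>n. n div M) S"
  proof (rule inj_onI)
    fix u v assume uv: "u\<in>S" "v\<in>S" "u div M = v div M"
    then have "u mod M = v mod M" using assms(4) unfolding cong_def by blast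
    then show "u = v" using uv(3) by (metis div_mult_mod_eq)
  qed
  have sub: "(\<lambda>n. n div M) ` S \<subseteq> {..nat \<lfloor>x / M\<rfloor>}"
  proof
    fix k assume "k \<in> (\<lambda>n. n div M) ` S"
    then obtain n where n: "n\<in>S" "k = n div M" by auto
    have "real (n div M) \<le> real n / M" by (rule of_nat_div_le_of_nat)
    also have "\<dots> \<le> x / M" using assms n by (simp add: divide_right_mono)
    finally have "real k \<le> x / M" using n by simp
    then show "k \<in> {..nat \<lfloor>x / M\<rfloor>}" by (simp add: le_nat_floor)
  qed
  have "card S = card ((\<lambda>n. n div M) ` S)" using card_image[OF inj] by simp
  also have "\<dots> \<le> card {..nat \<lfloor>x/M\<rfloor>}" by (rule card_mono) (use sub in auto)
  also have "\<dots> = nat \<lfloor>x/M\<rfloor> + 1" by simp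
  finally have "real (card S) \<le> real (nat \<lfloor>x/M\<rfloor>) + 1" by linarith
  also have "real (nat \<lfloor>x/M\<rfloor>) \<le> x / M" using assms(2) by simp
  finally show ?thesis by simp
qed

lemma odd_sum_aux:
  "k \<ge> 1 \<Longrightarrow> \<forall>I. I \<subseteq> {d::nat. odd d \<and> 5 \<le> d \<and> d \<le> 2*k+1} \<longrightarrow>
     (\<Sum>d\<in>I. 1/(real d)^2) \<le> 1/8 - 1/(4*(real k+1))"
proof (induction k)
  case 0 then show ?case by simp
next
  case (Suc k)
  show ?case
  proof (cases "k = 0")
    case True
    show ?thesis
    proof (intro allI impI)
      fix I assume "I \<subseteq> {d::nat. odd d \<and> 5 \<le> d \<and> d \<le> 2*Suc k+1}"
      then have "I = {}" using True by auto
      then show "(\<Sum>d\<in>I. 1/(real d)^2) \<le> 1/8 - 1/(4*(real (Suc k)+1))" using True by simp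
    qed
  next
    case False
    then have IH: "\<forall>I. I \<subseteq> {d::nat. odd d \<and> 5 \<le> d \<and> d \<le> 2*k+1} \<longrightarrow>
     (\<Sum>d\<in>I. 1/(real d)^2) \<le> 1/8 - 1/(4*(real k+1))" using Suc.IH by simp
    show ?thesis
    proof (intro allI impI)
      fix I assume I: "I \<subseteq> {d::nat. odd d \<and> 5 \<le> d \<and> d \<le> 2*Suc k+1}"
      define d0 where "d0 = 2*k+3"
      have fin: "finite I" using I finite_subset[of I "{..2*Suc k+1}"] by auto
      have I': "I - {d0} \<subseteq> {d::nat. odd d \<and> 5 \<le> d \<and> d \<le> 2*k+1}"
      proof
        fix d assume "d \<in> I - {d0}"
        then have "odd d" "5 \<le> d" "d \<le> 2*k+3" "d \<noteq> 2*k+3" using I d0_def by auto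
        moreover from this have "d \<le> 2*k+1" by presburger
        ultimately show "d \<in> {d::nat. odd d \<and> 5 \<le> d \<and> d \<le> 2*k+1}" by simp
      qed
      have s1: "(\<Sum>d\<in>I. 1/(real d)^2) \<le> (\<Sum>d\<in>I - {d0}. 1/(real d)^2) + 1/(real d0)^2"
      proof (cases "d0 \<in> I")
        case True
        then show ?thesis using sum.remove[OF fin True, of "\<lambda>d. 1/(real d)^2"] by simp
      next
        case False
        then show ?thesis by simp
      qed
      have s2: "1/(real d0)^2 \<le> 1/(4*(real k+1)) - 1/(4*(real (Suc k)+1))"
      proof -
        have e: "1/(4*(real k+1)) - 1/(4*(real (Suc k)+1)) = 1/(4*(real k+1)*(real k+2))"
        proof -
          have "real (Suc k) + 1 = real k + 2" by simp
          moreover have "real k + 1 > 0" "real k + 2 > 0" by auto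
          ultimately show ?thesis by (simp add: divide_simps)
        qed
        have "4*(real k+1)*(real k+2) \<le> (real d0)^2" unfolding d0_def
          by (simp add: power2_eq_square algebra_simps)
        then have "1/(real d0)^2 \<le> 1/(4*(real k+1)*(real k+2))"
          by (intro frac_le) auto
        then show ?thesis using e by simp
      qed
      show "(\<Sum>d\<in>I. 1/(real d)^2) \<le> 1/8 - 1/(4*(real (Suc k)+1))"
      proof -
        have "(\<Sum>d\<in>I - {d0}. 1/(real d)^2) \<le> 1/8 - 1/(4*(real k+1))" using IH I' by blast
        then show ?thesis using s1 s2 by linarith
      qed
    qed
  qed
qed

lemma odd_sum:
  fixes I :: "nat set" assumes "I \<subseteq> {p. prime p \<and> 5 \<le> p}" "finite I"
  shows "(\<Sum>d\<in>I. 1/(real d)^2) \<le> 1/8"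
proof -
  obtain N where N: "\<forall>d\<in>I. d \<le> N" using assms(2) finite_nat_set_iff_bounded_le by blast
  have "I \<subseteq> {d::nat. odd d \<and> 5 \<le> d \<and> d \<le> 2*(N+1)+1}"
  proof
    fix d assume d: "d \<in> I"
    then have "prime d" "5 \<le> d" using assms by auto
    then have "odd d" using prime_odd_nat by fastforce
    then show "d \<in> {d::nat. odd d \<and> 5 \<le> d \<and> d \<le> 2*(N+1)+1}" using N d \<open>5 \<le> d\<close> by fastforce
  qed
  then have "(\<Sum>d\<in>I. 1/(real d)^2) \<le> 1/8 - 1/(4*(real (N+1)+1))"
    using odd_sum_aux[of "N+1"] by simp
  also have "\<dots> \<le> 1/8" by simp
  finally show ?thesis .
qed

lemma tail_sum_aux:
  fixes K :: nat assumes "K \<ge> 1"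
  shows "\<forall>I. I \<subseteq> {K<..N} \<longrightarrow> (\<Sum>d\<in>I. 1/(real d)^2) \<le> 1/K - 1/(max K N)"
proof (induction N)
  case 0 then show ?case by auto
next
  case (Suc N)
  show ?case
  proof (intro allI impI)
    fix I assume I: "I \<subseteq> {K<..Suc N}"
    show "(\<Sum>d\<in>I. 1/(real d)^2) \<le> 1/K - 1/(max K (Suc N))"
    proof (cases "Suc N \<le> K")
      case True
      then have "I = {}" using I by auto
      then show ?thesis using True by (simp add: max_def)
    next
      case False
      then have mx: "max K N = N" "max K (Suc N) = Suc N" by auto
      have fin: "finite I" using I finite_subset by blast
      have I': "I - {Suc N} \<subseteq> {K<..N}" using I by auto
      have s1: "(\<Sum>d\<in>I. 1/(real d)^2) \<le> (\<Sum>d\<in>I - {Suc N}. 1/(real d)^2) + 1/(real (Suc N))^2"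
      proof (cases "Suc N \<in> I")
        case True
        then show ?thesis using sum.remove[OF fin True, of "\<lambda>d. 1/(real d)^2"] by simp
      next
        case False
        then show ?thesis by simp
      qed
      have N1: "N \<ge> 1" using False assms by simp
      have s2: "1/(real (Suc N))^2 \<le> 1/real N - 1/real (Suc N)"
      proof -
        have e: "1/real N - 1/real (Suc N) = 1/(real N * (real N + 1))"
          using N1 by (simp add: field_simps)
        have "real N * (real N + 1) \<le> (real (Suc N))^2"
          by (simp add: power2_eq_square algebra_simps)
        then have "1/(real (Suc N))^2 \<le> 1/(real N * (real N + 1))"
          using N1 by (intro frac_le) auto
        then show ?thesis using e by simp
      qed
      have "(\<Sum>d\<in>I - {Suc N}. 1/(real d)^2) \<le> 1/K - 1/(max K N)" using Suc.IH I' by blast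
      then show ?thesis using s1 s2 mx by simp
    qed
  qed
qed

lemma tail_sum:
  fixes K :: nat assumes "K \<ge> 1" "I \<subseteq> {K<..N}"
  shows "(\<Sum>d\<in>I. 1/(real d)^2) \<le> 1/K"
proof -
  have "(\<Sum>d\<in>I. 1/(real d)^2) \<le> 1/K - 1/(max K N)" using tail_sum_aux[OF assms(1)] assms(2) by blast
  also have "\<dots> \<le> 1/K" by simp
  finally show ?thesis .
qed


lemma mod36_2a:
  fixes n m a :: nat assumes "n mod 36 = a" "m mod 36 = a"
  shows "(n + m) mod 36 = (2*a) mod 36"
  using assms by (metis mod_add_eq mult_2)

lemma F1:
  fixes n m a :: nat
  assumes "n mod 36 = a" "m mod 36 = a" "a < 36" "(2*a) mod 36 \<notin> Qres"
    "\<not> squarefree (n + m)" "n \<ge> 1"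
  shows "\<exists>p. prime p \<and> 5 \<le> p \<and> p^2 dvd n + m"
proof -
  obtain p where p: "prime p" "p^2 dvd n + m" using nsf_prime[of "n+m"] assms by auto
  have c: "(n + m) mod 36 = (2*a) mod 36" using mod36_2a assms by blast
  have "p \<noteq> 2"
  proof
    assume "p = 2"
    then have "4 dvd n + m" using p by simp
    then have "(n+m) mod 36 mod 4 = 0" by (simp add: mod_mod_cancel)
    then have "(2*a) mod 36 mod 4 = 0" using c by simp
    then show False using res4 assms(4) by simp
  qed
  moreover have "p \<noteq> 3"
  proof
    assume "p = 3"
    then have "9 dvd n + m" using p by simp
    then have "(n+m) mod 36 mod 9 = 0" by (simp add: mod_mod_cancel)
    then have "(2*a) mod 36 mod 9 = 0" using c by simp
    then show False using res9 assms(4) by simp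
  qed
  moreover have "p \<noteq> 4" using p not_prime4 by auto
  moreover have "p \<ge> 2" using p prime_ge_2_nat by blast
  ultimately have "p \<ge> 5" by linarith
  then show ?thesis using p by blast
qed

lemma cop_sq:
  fixes p q :: nat assumes "prime p" "5 \<le> p" "prime q" "5 \<le> q" "p \<noteq> q"
  shows "coprime (36 * p^2) (q^2)"
proof -
  have "coprime 36 q" using coprime36 assms by blast
  moreover have "coprime p q" using assms primes_coprime by blast
  ultimately show ?thesis by simp
qed

lemma card_C:
  fixes p q m a :: nat and x :: real
  assumes "prime p" "5 \<le> p" "prime q" "5 \<le> q" "p \<noteq> q" "x \<ge> 0"
  shows "real (card {n. real n \<le> x \<and> n mod 36 = a \<and> p^2 dvd n \<and> q^2 dvd n + m})
     \<le> x / (36 * (real p)^2 * (real q)^2) + 1"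
proof -
  let ?S = "{n. real n \<le> x \<and> n mod 36 = a \<and> p^2 dvd n \<and> q^2 dvd n + m}"
  have "\<forall>u\<in>?S. \<forall>v\<in>?S. [u = v] (mod 36 * p^2 * q^2)"
  proof (intro ballI)
    fix u v assume u: "u \<in> ?S" and v: "v \<in> ?S"
    have c1: "[u = v] (mod 36)" using u v by (simp add: cong_def)
    have c2: "[u = v] (mod p^2)" using u v by (simp add: cong_def dvd_eq_mod_eq_0)
    have "[u + m = v + m] (mod q^2)" using u v by (simp add: cong_def dvd_eq_mod_eq_0)
    then have c3: "[u = v] (mod q^2)" by (simp add: cong_add_rcancel_nat)
    have "coprime 36 (p^2)" using coprime36 assms by simp
    then have "[u = v] (mod 36 * p^2)" using c1 c2 coprime_cong_mult_nat by blast
    then show "[u = v] (mod 36 * p^2 * q^2)" using c3 cop_sq[OF assms(1-5)] coprime_cong_mult_nat by blast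
  qed
  moreover have "36 * p^2 * q^2 > 0" using assms by simp
  ultimately have "real (card ?S) \<le> x / real (36 * p^2 * q^2) + 1"
    using spacing[of "36 * p^2 * q^2" x ?S] assms(6) by auto
  then show ?thesis by simp
qed

lemma card_E:
  fixes p a :: nat and x :: real
  assumes "prime p" "5 \<le> p" "x \<ge> 0"
  shows "real (card {n. real n \<le> x \<and> n mod 36 = a \<and> p^2 dvd n})
     \<le> x / (36 * (real p)^2) + 1"
proof -
  let ?S = "{n. real n \<le> x \<and> n mod 36 = a \<and> p^2 dvd n}"
  have "\<forall>u\<in>?S. \<forall>v\<in>?S. [u = v] (mod 36 * p^2)"
  proof (intro ballI)
    fix u v assume u: "u \<in> ?S" and v: "v \<in> ?S"
    have c1: "[u = v] (mod 36)" using u v by (simp add: cong_def)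
    have c2: "[u = v] (mod p^2)" using u v by (simp add: cong_def dvd_eq_mod_eq_0)
    have "coprime 36 (p^2)" using coprime36 assms by simp
    then show "[u = v] (mod 36 * p^2)" using c1 c2 coprime_cong_mult_nat by blast
  qed
  moreover have "36 * p^2 > 0" using assms by simp
  ultimately have "real (card ?S) \<le> x / real (36 * p^2) + 1"
    using spacing[of "36 * p^2" x ?S] assms(3) by auto
  then show ?thesis by simp
qed


lemma finset_x: "{n::nat. real n \<le> x \<and> Q n} \<subseteq> {..nat \<lfloor>x\<rfloor>}"
  by (auto simp: le_nat_floor)

theorem lemma5:
  fixes \<epsilon> \<eta> :: real
  assumes "\<epsilon> > 0" and "\<eta> > 0"
  shows "\<exists>X. \<forall>x\<ge>X. \<forall>A. standing \<epsilon> x A \<longrightarrow>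
           (\<forall>a<36. (2 * a) mod 36 \<notin> Qres \<longrightarrow> delta_res A x a \<le> 0.04 + \<eta>)"
proof -
  define K :: nat where "K = nat \<lceil>4/\<eta>\<rceil> + 1"
  define X :: real where "X = max 1 (max (36/\<eta>) ((216*(real K+2)/\<eta>)^2))"
  have K1: "K \<ge> 1" by (simp add: K_def)
  have Keta: "1 / real K \<le> \<eta>/4"
  proof -
    have "4/\<eta> \<le> real (nat \<lceil>4/\<eta>\<rceil>)" by (rule real_nat_ceiling_ge)
    then have k4: "4/\<eta> \<le> real K" unfolding K_def by simp
    have "0 < 4/\<eta>" using assms by simp
    then have "1 / real K \<le> 1 / (4/\<eta>)" using k4 by (intro frac_le) auto
    then show ?thesis by simp
  qed
  show ?thesis
  proof (rule exI[of _ X], intro allI impI)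
    fix x A a
    assume x: "X \<le> x" and st: "standing \<epsilon> x A" and a: "a < (36::nat)" and Qa: "(2 * a) mod 36 \<notin> Qres"
    have x1: "x \<ge> 1" "x \<ge> 36/\<eta>" "x \<ge> (216*(real K+2)/\<eta>)^2" using x by (auto simp: X_def)
    have x0: "x > 0" using x1 by simp
    define B where "B = {n\<in>A. n mod 36 = a}"
    from st have Asub: "A \<subseteq> {n. 1 \<le> n \<and> real n \<le> x}" and nsf: "\<forall>u\<in>A. \<forall>v\<in>A. \<not> squarefree (u+v)"
      by (auto simp: standing_def)
    have Bx: "\<And>n. n \<in> B \<Longrightarrow> 1 \<le> n \<and> real n \<le> x \<and> n mod 36 = a"
      using Asub by (auto simp: B_def)
    have FB: "\<And>n m. n\<in>B \<Longrightarrow> m\<in>B \<Longrightarrow> \<exists>p. prime p \<and> 5 \<le> p \<and> p^2 dvd n+m"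
    proof -
      fix n m assume n: "n\<in>B" and m: "m\<in>B"
      have "\<not> squarefree (n+m)" using nsf n m by (auto simp: B_def)
      then show "\<exists>p. prime p \<and> 5 \<le> p \<and> p^2 dvd n+m"
        using F1[of n a m] Bx[OF n] Bx[OF m] a Qa by blast
    qed
    have main: "real (card B) \<le> (0.04 + \<eta>) * x / 36"
    proof (cases "\<exists>p. prime p \<and> 5 \<le> p \<and> (\<forall>n\<in>B. p^2 dvd n)")
      case True
      then obtain p where p: "prime p" "5 \<le> p" "\<forall>n\<in>B. p^2 dvd n" by blast
      let ?E = "{n. real n \<le> x \<and> n mod 36 = a \<and> p^2 dvd n}"
      have "B \<subseteq> ?E" using Bx p by auto
      moreover have "finite ?E" by (rule finite_subset[OF finset_x]) simp
      ultimately have "card B \<le> card ?E" by (intro card_mono)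
      then have "real (card B) \<le> real (card ?E)" by simp
      also have "\<dots> \<le> x / (36 * (real p)^2) + 1" using card_E[OF p(1,2)] x0 by simp
      also have "x / (36 * (real p)^2) \<le> x / 900"
      proof -
        have "(5::real) \<le> real p" using p(2) by simp
        then have "(5::real) * 5 \<le> real p * real p" by (intro mult_mono) auto
        then have "(25::real) \<le> (real p)^2" by (simp add: power2_eq_square)
        then show ?thesis using x0 p(2) by (intro divide_left_mono) auto
      qed
      also have "x / 900 + 1 \<le> (0.04 + \<eta>) * x / 36"
      proof -
        have "\<eta> * (36/\<eta>) \<le> \<eta> * x" using x1(2) assms(2) by (intro mult_left_mono) auto
        then have "\<eta> * x \<ge> 36" using assms(2) by simp
        then show ?thesis by (simp add: algebra_simps)
      qed
      finally show ?thesis by simp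
    next
      case False
      have ex: "\<And>p. prime p \<Longrightarrow> 5 \<le> p \<Longrightarrow> \<exists>m. m \<in> B \<and> \<not> p^2 dvd m" using False by blast
      define mp where "mp p = (SOME m. m \<in> B \<and> \<not> p^2 dvd m)" for p
      have mp: "\<And>p. prime p \<Longrightarrow> 5 \<le> p \<Longrightarrow> mp p \<in> B \<and> \<not> p^2 dvd mp p"
        unfolding mp_def using someI_ex[OF ex] by blast
      define L where "L = nat \<lfloor>sqrt (2*x)\<rfloor>"
      define P where "P = {p::nat. prime p \<and> 5 \<le> p}"
      define C where "C p q = {n. real n \<le> x \<and> n mod 36 = a \<and> p^2 dvd n \<and> q^2 dvd n + mp p}" for p q
      define E where "E p = {n. real n \<le> x \<and> n mod 36 = a \<and> p^2 dvd n}" for p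
      define I1 where "I1 = P \<inter> {..K}"
      define I2 where "I2 p = P \<inter> {..L} - {p}" for p
      define I3 where "I3 = P \<inter> {K<..L}"
      have sqL: "\<And>d. real (d^2) \<le> 2*x \<Longrightarrow> d \<le> L"
      proof -
        fix d :: nat assume "real (d^2) \<le> 2*x"
        then have "(real d)^2 \<le> 2*x" by simp
        then have "real d \<le> sqrt (2*x)" by (rule real_le_rsqrt)
        then show "d \<le> L" unfolding L_def by (simp add: le_nat_floor)
      qed
      have cover: "B \<subseteq> (\<Union>p\<in>I1. \<Union>q\<in>I2 p. C p q) \<union> (\<Union>p\<in>I3. E p)"
      proof
        fix n assume n: "n \<in> B"
        obtain p where p: "prime p" "5 \<le> p" "p^2 dvd n + n" using FB[OF n n] by blast
        have "coprime p 2" using p primes_coprime[of p 2] by auto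
        then have "coprime (p^2) 2" by simp
        moreover have "p^2 dvd n * 2" using p(3) by (simp add: mult_2_right)
        ultimately have pn: "p^2 dvd n" using coprime_dvd_mult_left_iff by blast
        have n1: "1 \<le> n" "real n \<le> x" "n mod 36 = a" using Bx[OF n] by auto
        have "p^2 \<le> n" using pn n1 by (intro dvd_imp_le) auto
        then have "real (p^2) \<le> real n" by (simp only: of_nat_le_iff)
        then have "real (p^2) \<le> 2*x" using n1 x0 by linarith
        then have pL: "p \<le> L" by (rule sqL)
        show "n \<in> (\<Union>p\<in>I1. \<Union>q\<in>I2 p. C p q) \<union> (\<Union>p\<in>I3. E p)"
        proof (cases "p \<le> K")
          case True
          have m: "mp p \<in> B" "\<not> p^2 dvd mp p" using mp p by auto
          obtain q where q: "prime q" "5 \<le> q" "q^2 dvd n + mp p" using FB[OF n m(1)] by blast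
          have qp: "q \<noteq> p"
          proof
            assume "q = p"
            then have "p^2 dvd n + mp p" using q by simp
            then have "p^2 dvd mp p" using pn dvd_add_right_iff by blast
            then show False using m by simp
          qed
          have m1: "real (mp p) \<le> x" using Bx[OF m(1)] by auto
          have "q^2 \<le> n + mp p" using q n1 by (intro dvd_imp_le) auto
          then have "real (q^2) \<le> real n + real (mp p)" by (metis of_nat_add of_nat_le_iff)
          then have "real (q^2) \<le> 2*x" using n1 m1 by linarith
          then have qL: "q \<le> L" by (rule sqL)
          have "p \<in> I1" using True p by (auto simp: I1_def P_def)
          moreover have "q \<in> I2 p" using q qp qL by (auto simp: I2_def P_def)
          moreover have "n \<in> C p q" using n1 pn q by (auto simp: C_def)
          ultimately show ?thesis by blast
        next
          case False
          then have "p \<in> I3" using p pL by (auto simp: I3_def P_def)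
          moreover have "n \<in> E p" using n1 pn by (auto simp: E_def)
          ultimately show ?thesis by blast
        qed
      qed
      have finU: "finite ((\<Union>p\<in>I1. \<Union>q\<in>I2 p. C p q) \<union> (\<Union>p\<in>I3. E p))"
        by (rule finite_subset[of _ "{..nat \<lfloor>x\<rfloor>}"]) (auto simp: C_def E_def le_nat_floor)
      have finI1: "finite I1" by (simp add: I1_def)
      have finI2: "\<And>p. finite (I2 p)" by (simp add: I2_def)
      have finI3: "finite I3" by (simp add: I3_def)
      have cU1: "card (\<Union>p\<in>I1. \<Union>q\<in>I2 p. C p q) \<le> (\<Sum>p\<in>I1. \<Sum>q\<in>I2 p. card (C p q))"
      proof -
        have "card (\<Union>p\<in>I1. \<Union>q\<in>I2 p. C p q) \<le> (\<Sum>p\<in>I1. card (\<Union>q\<in>I2 p. C p q))"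
          by (rule card_UN_le[OF finI1])
        also have "\<dots> \<le> (\<Sum>p\<in>I1. \<Sum>q\<in>I2 p. card (C p q))"
          by (intro sum_mono card_UN_le finI2)
        finally show ?thesis .
      qed
      have cU3: "card (\<Union>p\<in>I3. E p) \<le> (\<Sum>p\<in>I3. card (E p))" by (rule card_UN_le[OF finI3])
      have "card B \<le> card ((\<Union>p\<in>I1. \<Union>q\<in>I2 p. C p q) \<union> (\<Union>p\<in>I3. E p))"
        by (rule card_mono[OF finU cover])
      also have "\<dots> \<le> card (\<Union>p\<in>I1. \<Union>q\<in>I2 p. C p q) + card (\<Union>p\<in>I3. E p)" by (rule card_Un_le)
      finally have "card B \<le> (\<Sum>p\<in>I1. \<Sum>q\<in>I2 p. card (C p q)) + (\<Sum>p\<in>I3. card (E p))"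
        using cU1 cU3 by linarith
      then have "real (card B) \<le> real ((\<Sum>p\<in>I1. \<Sum>q\<in>I2 p. card (C p q)) + (\<Sum>p\<in>I3. card (E p)))"
        by (rule of_nat_mono)
      then have cardB: "real (card B) \<le> (\<Sum>p\<in>I1. \<Sum>q\<in>I2 p. real (card (C p q))) + (\<Sum>p\<in>I3. real (card (E p)))"
        by (simp add: of_nat_sum)
      have cardLe: "\<And>S. S \<subseteq> {..L} \<Longrightarrow> real (card S) \<le> real L + 1"
      proof -
        fix S assume "S \<subseteq> {..L}"
        then have "card S \<le> card {..L}" by (intro card_mono) auto
        then show "real (card S) \<le> real L + 1" by simp
      qed
      have b1: "\<And>p. p\<in>I1 \<Longrightarrow> (\<Sum>q\<in>I2 p. real (card (C p q))) \<le> x/(36*(real p)^2) * (1/8) + (real L + 1)"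
      proof -
        fix p assume pI: "p \<in> I1"
        then have p: "prime p" "5 \<le> p" by (auto simp: I1_def P_def)
        have "(\<Sum>q\<in>I2 p. real (card (C p q))) \<le> (\<Sum>q\<in>I2 p. x/(36*(real p)^2) * (1/(real q)^2) + 1)"
        proof (rule sum_mono)
          fix q assume "q \<in> I2 p"
          then have q: "prime q" "5 \<le> q" "q \<noteq> p" by (auto simp: I2_def P_def)
          have "real (card (C p q)) \<le> x / (36 * (real p)^2 * (real q)^2) + 1"
            unfolding C_def using card_C[OF p q(1,2) q(3)[symmetric]] x0 by simp
          then show "real (card (C p q)) \<le> x/(36*(real p)^2) * (1/(real q)^2) + 1" by simp
        qed
        also have "\<dots> = x/(36*(real p)^2) * (\<Sum>q\<in>I2 p. 1/(real q)^2) + real (card (I2 p))"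
          by (simp add: sum.distrib sum_distrib_left)
        also have "\<dots> \<le> x/(36*(real p)^2) * (1/8) + (real L + 1)"
        proof (rule add_mono)
          have "(\<Sum>q\<in>I2 p. 1/(real q)^2) \<le> 1/8" by (rule odd_sum) (auto simp: I2_def P_def)
          moreover have "x/(36*(real p)^2) \<ge> 0" using x0 by simp
          ultimately show "x/(36*(real p)^2) * (\<Sum>q\<in>I2 p. 1/(real q)^2) \<le> x/(36*(real p)^2) * (1/8)"
            by (rule mult_left_mono)
          show "real (card (I2 p)) \<le> real L + 1" by (rule cardLe) (auto simp: I2_def)
        qed
        finally show "(\<Sum>q\<in>I2 p. real (card (C p q))) \<le> x/(36*(real p)^2) * (1/8) + (real L + 1)" .
      qed
      have b2: "(\<Sum>p\<in>I1. \<Sum>q\<in>I2 p. real (card (C p q))) \<le> x/288 * (1/8) + (real K + 1) * (real L + 1)"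
      proof -
        have "(\<Sum>p\<in>I1. \<Sum>q\<in>I2 p. real (card (C p q))) \<le> (\<Sum>p\<in>I1. x/288 * (1/(real p)^2) + (real L + 1))"
        proof (rule sum_mono)
          fix p assume "p \<in> I1"
          then show "(\<Sum>q\<in>I2 p. real (card (C p q))) \<le> x/288 * (1/(real p)^2) + (real L + 1)"
            using b1 by simp
        qed
        also have "\<dots> = x/288 * (\<Sum>p\<in>I1. 1/(real p)^2) + real (card I1) * (real L + 1)"
          by (simp add: sum.distrib sum_distrib_left)
        also have "\<dots> \<le> x/288 * (1/8) + (real K + 1) * (real L + 1)"
        proof (rule add_mono)
          have "(\<Sum>p\<in>I1. 1/(real p)^2) \<le> 1/8" by (rule odd_sum) (auto simp: I1_def P_def)
          then show "x/288 * (\<Sum>p\<in>I1. 1/(real p)^2) \<le> x/288 * (1/8)" using x0 by (intro mult_left_mono) auto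
          have "card I1 \<le> card {..K}" by (intro card_mono) (auto simp: I1_def)
          then have "real (card I1) \<le> real K + 1" by simp
          then show "real (card I1) * (real L + 1) \<le> (real K + 1) * (real L + 1)" by (intro mult_right_mono) auto
        qed
        finally show ?thesis .
      qed
      have b3: "(\<Sum>p\<in>I3. real (card (E p))) \<le> x/36 * (1/real K) + (real L + 1)"
      proof -
        have "(\<Sum>p\<in>I3. real (card (E p))) \<le> (\<Sum>p\<in>I3. x/36 * (1/(real p)^2) + 1)"
        proof (rule sum_mono)
          fix p assume "p \<in> I3"
          then have p: "prime p" "5 \<le> p" by (auto simp: I3_def P_def)
          have "real (card (E p)) \<le> x / (36 * (real p)^2) + 1"
            unfolding E_def using card_E[OF p] x0 by simp
          then show "real (card (E p)) \<le> x/36 * (1/(real p)^2) + 1" by simp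
        qed
        also have "\<dots> = x/36 * (\<Sum>p\<in>I3. 1/(real p)^2) + real (card I3)"
          by (simp add: sum.distrib sum_distrib_left)
        also have "\<dots> \<le> x/36 * (1/real K) + (real L + 1)"
        proof (rule add_mono)
          have "(\<Sum>p\<in>I3. 1/(real p)^2) \<le> 1/real K" by (rule tail_sum[OF K1]) (auto simp: I3_def)
          then show "x/36 * (\<Sum>p\<in>I3. 1/(real p)^2) \<le> x/36 * (1/real K)" using x0 by (intro mult_left_mono) auto
          show "real (card I3) \<le> real L + 1" by (rule cardLe) (auto simp: I3_def)
        qed
        finally show ?thesis .
      qed
      have Lb: "real L + 1 \<le> 3 * sqrt x"
      proof -
        have "real L \<le> sqrt (2*x)" unfolding L_def using x0 by simp
        also have "sqrt (2*x) = sqrt 2 * sqrt x" by (simp add: real_sqrt_mult)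
        also have "\<dots> \<le> 2 * sqrt x"
        proof -
          have "sqrt 2 \<le> 2" by (rule real_le_lsqrt) auto
          then show ?thesis using x0 by (intro mult_right_mono) auto
        qed
        finally have "real L \<le> 2 * sqrt x" .
        moreover have "1 \<le> sqrt x" using x1(1) by simp
        ultimately show ?thesis by linarith
      qed
      have sx: "216*(real K+2)/\<eta> \<le> sqrt x" using x1(3) by (rule real_le_rsqrt)
      have etax: "216*(real K+2) * sqrt x \<le> \<eta> * x"
      proof -
        have "216*(real K+2) = \<eta> * (216*(real K+2)/\<eta>)" using assms(2) by simp
        also have "\<dots> \<le> \<eta> * sqrt x" using sx assms(2) by (intro mult_left_mono) auto
        finally have "216*(real K+2) * sqrt x \<le> \<eta> * sqrt x * sqrt x" using x0 by (intro mult_right_mono) auto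
        also have "\<eta> * sqrt x * sqrt x = \<eta> * x" using x0 by (simp add: mult.assoc)
        finally show ?thesis .
      qed
      have err: "(real K + 1) * (real L + 1) + (real L + 1) \<le> \<eta> * x / 72"
      proof -
        have "(real K + 1) * (real L + 1) + (real L + 1) = (real K + 2) * (real L + 1)" by (simp add: algebra_simps)
        also have "\<dots> \<le> (real K + 2) * (3 * sqrt x)" using Lb by (intro mult_left_mono) auto
        finally have "(real K + 1) * (real L + 1) + (real L + 1) \<le> (real K + 2) * (3 * sqrt x)" .
        moreover have "(real K + 2) * (3 * sqrt x) * 72 = 216*(real K+2) * sqrt x" by (simp add: algebra_simps)
        ultimately show ?thesis using etax by linarith
      qed
      have kt: "x/36 * (1/real K) \<le> x/36 * (\<eta>/4)" using Keta x0 by (intro mult_left_mono) auto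
      have "real (card B) \<le> x/288 * (1/8) + x/36 * (\<eta>/4) + \<eta> * x / 72"
        using cardB b2 b3 err kt by linarith
      also have "\<dots> \<le> (0.04 + \<eta>) * x / 36" using x0 assms(2) by (simp add: field_simps)
      finally show ?thesis .
    qed
    have "delta_res A x a = 36 * real (card B) / x" by (simp add: delta_res_def B_def)
    also have "\<dots> \<le> 0.04 + \<eta>" using main x0 by (simp add: divide_simps)
    finally show "delta_res A x a \<le> 0.04 + \<eta>" .
  qed
qed

end
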